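(* Let $\Pi>0$ and $m$ be a positive integer. Consider MPR interfaces $R_1=\langle\Pi,\Theta_1,m'_1\rangle,\dots,R_p=\langle\Pi,\Theta_p,m'_p\rangle$ with positive integers $m'_i$ and $(m'_i-1)\Pi\le\Theta_i\le m'_i\Pi$. Transform each $R_i$ into the periodic task set consisting of $m'_i-1$ tasks $(\Pi,\Pi,\Pi)$ and one task $(\Pi,\Theta_i-(m'_i-1)\Pi,\Pi)$. Then McNaughton's algorithm successfully schedules the union of all transformed tasks on $m$ identical unit-capacity processors if and only if $$\sum_{i=1}^p\frac{\Theta_i}{\Pi}\le m.$$
   Context: A periodic task $(T,C,T)$ releases a job at every time $jT$, $j\ge0$. The job requires $C$ units of execution in $(jT,(j+1)T]$ and never executes on two processors simultaneously. McNaughton's algorithm, for periodic tasks all having period and deadline $T$, works in each window $(jT,(j+1)T]$ separately. It takes the jobs in a fixed order and fills processor $1$ from time $jT$. Whenever a processor $p$ is filled up to $(j+1)T$, the remainder of the current job is placed on processor $p+1$ starting at time $jT$, and so on. Success means that the schedule: - uses only processors $1,\dots,m$; - never runs a job on two processors simultaneously; - meets all deadlines. *)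

theory Defs
  imports "HOL-Analysis.Analysis" "HOL-Library.Multiset"
begin

text \<open>A periodic task (T,C,T) with common period/deadline T is represented by its
execution requirement C; a task set with common period T is a list of
requirements, the list order being the fixed order used by McNaughton's algorithm.\<close>

definition mcn_start :: "real list \<Rightarrow> nat \<Rightarrow> real" where
  "mcn_start cs k = (\<Sum>i<k. cs ! i)"

definition mcn_window :: "real \<Rightarrow> real \<Rightarrow> nat" where
  "mcn_window T t = nat (\<lceil>t / T\<rceil> - 1)"

text \<open>McNaughton's wrap-around schedule (with unboundedly many processors,
numbered 1,2,...): in each window the jobs are laid out consecutively on the line
of length (number of processors) * T, processor p covering the segment
((p-1)T, pT]. Result: the task whose job runs on processor p at time t, if any.\<close>
definition mcn_sched :: "real \<Rightarrow> real list \<Rightarrow> nat \<Rightarrow> real \<Rightarrow> nat option" where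
  "mcn_sched T cs p t =
    (if t \<le> 0 \<or> p = 0 then None else
     (let j = mcn_window T t; s = t - real j * T; x = (real p - 1) * T + s;
          P = (\<lambda>k. k < length cs \<and> mcn_start cs k < x \<and> x \<le> mcn_start cs k + cs ! k)
      in if \<exists>k. P k then Some (LEAST k. P k) else None))"

definition mcn_success :: "real \<Rightarrow> real list \<Rightarrow> nat \<Rightarrow> bool" where
  "mcn_success T cs m \<longleftrightarrow>
     (\<forall>p t. mcn_sched T cs p t \<noteq> None \<longrightarrow> 1 \<le> p \<and> p \<le> m)
   \<and> (\<forall>p q t k. mcn_sched T cs p t = Some k \<and> mcn_sched T cs q t = Some k \<longrightarrow> p = q)
   \<and> (\<forall>j k. k < length cs \<longrightarrow>
        (\<Sum>p. emeasure lborel {t \<in> {real j * T<..(real j + 1) * T}. mcn_sched T cs p t = Some k})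
          = ennreal (cs ! k))"

definition mpr_tasks :: "real \<Rightarrow> real \<Rightarrow> nat \<Rightarrow> real list" where
  "mpr_tasks Per Theta m' = replicate (m' - 1) Per @ [Theta - (real m' - 1) * Per]"

end

theory Submission imports Defs begin

lemma Ioc_meas: "emeasure lborel {l<..(u::real)} = ennreal (u - l)"
proof (cases "l \<le> u")
  case True then show ?thesis by simp
next
  case False then have "{l<..u} = {}" by auto
  then show ?thesis using False by (simp add: ennreal_neg)
qed

lemma start_Suc: "mcn_start cs (Suc k) = mcn_start cs k + cs ! k"
  by (simp add: mcn_start_def)

lemma start_mono:
  assumes "\<forall>c\<in>set cs. 0 \<le> c" "k \<le> k'" "k' \<le> length cs"
  shows "mcn_start cs k \<le> mcn_start cs k'"
  unfolding mcn_start_def using assms by (auto intro!: sum_mono2)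

lemma start_len: "mcn_start cs (length cs) = sum_list cs"
  by (simp add: mcn_start_def sum_list_sum_nth atLeast0LessThan)

lemma start_exists: "0 < x \<Longrightarrow> x \<le> sum_list cs \<Longrightarrow>
   \<exists>k<length cs. mcn_start cs k < x \<and> x \<le> mcn_start cs k + cs ! k"
proof (induction cs arbitrary: x)
  case Nil then show ?case by simp
next
  case (Cons c cs)
  show ?case
  proof (cases "x \<le> c")
    case True then show ?thesis using Cons.prems by (intro exI[of _ 0]) (simp add: mcn_start_def)
  next
    case False
    then have "0 < x - c" "x - c \<le> sum_list cs" using Cons.prems by auto
    then obtain k where "k < length cs" "mcn_start cs k < x - c" "x - c \<le> mcn_start cs k + cs ! k"
      using Cons.IH by blast
    moreover have "mcn_start (c#cs) (Suc k) = c + mcn_start cs k"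
      unfolding mcn_start_def sum.lessThan_Suc_shift by simp
    ultimately show ?thesis by (intro exI[of _ "Suc k"]) auto
  qed
qed

lemma P_unique:
  assumes "\<forall>c\<in>set cs. 0 \<le> c" "k < length cs" "k' < length cs"
    "mcn_start cs k < x" "x \<le> mcn_start cs k + cs ! k"
    "mcn_start cs k' < x" "x \<le> mcn_start cs k' + cs ! k'"
  shows "k = k'"
proof (rule ccontr)
  assume "k \<noteq> k'"
  then consider "k < k'" | "k' < k" by linarith
  then show False
  proof cases
    case 1
    then have "mcn_start cs (Suc k) \<le> mcn_start cs k'" using assms by (intro start_mono) auto
    then show False using assms start_Suc[of cs k] by linarith
  next
    case 2
    then have "mcn_start cs (Suc k') \<le> mcn_start cs k" using assms by (intro start_mono) auto
    then show False using assms start_Suc[of cs k'] by linarith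
  qed
qed

lemma window_eq:
  assumes "T > 0" "real j * T < t" "t \<le> (real j + 1) * T"
  shows "mcn_window T t = j"
proof -
  have "\<lceil>t / T\<rceil> = int j + 1" unfolding ceiling_eq_iff
    using assms by (simp add: field_simps)
  then show ?thesis by (simp add: mcn_window_def)
qed

lemma sched_some:
  assumes "T > 0" "\<forall>c\<in>set cs. 0 \<le> c" "real j * T < t" "t \<le> (real j + 1) * T" "p \<ge> 1" "k < length cs"
  shows "mcn_sched T cs p t = Some k \<longleftrightarrow>
    (mcn_start cs k < (real p - 1) * T + (t - real j * T) \<and> (real p - 1) * T + (t - real j * T) \<le> mcn_start cs k + cs ! k)"
proof -
  have t0: "t > 0" using assms by (smt (verit) mult_nonneg_nonneg of_nat_0_le_iff)
  define x where "x = (real p - 1) * T + (t - real j * T)"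
  define P where "P = (\<lambda>k. k < length cs \<and> mcn_start cs k < x \<and> x \<le> mcn_start cs k + cs ! k)"
  have s: "mcn_sched T cs p t = (if \<exists>k. P k then Some (LEAST k. P k) else None)"
    using t0 assms window_eq[OF assms(1,3,4)] unfolding mcn_sched_def P_def x_def Let_def by (simp; blast)
  have u: "P a \<Longrightarrow> P b \<Longrightarrow> a = b" for a b using P_unique[OF assms(2)] unfolding P_def by blast
  have "mcn_sched T cs p t = Some k \<longleftrightarrow> (mcn_start cs k < x \<and> x \<le> mcn_start cs k + cs ! k)"
  proof
    assume "mcn_sched T cs p t = Some k"
    then have "\<exists>k. P k" "(LEAST k. P k) = k" using s by (auto split: if_splits)
    then have "P k" using LeastI_ex by metis
    then show "mcn_start cs k < x \<and> x \<le> mcn_start cs k + cs ! k" unfolding P_def by auto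
  next
    assume "mcn_start cs k < x \<and> x \<le> mcn_start cs k + cs ! k"
    then have "P k" unfolding P_def using assms by auto
    then have "(LEAST k. P k) = k" using u by (metis LeastI)
    then show "mcn_sched T cs p t = Some k" using s \<open>P k\<close> by auto
  qed
  then show ?thesis by (simp add: x_def)
qed

lemma Ioc_inter: "{a<..(b::real)} \<inter> {c<..d} = {max a c<..min b d}"
  by auto

lemma meas_k:
  assumes T: "T > 0" and nn: "\<forall>c\<in>set cs. 0 \<le> c" and k: "k < length cs"
  shows "(\<Sum>p. emeasure lborel {t \<in> {real j * T<..(real j + 1) * T}. mcn_sched T cs p t = Some k})
          = ennreal (cs ! k)"
proof -
  define a where "a = mcn_start cs k"
  define b where "b = a + cs ! k"
  have a0: "a \<ge> 0" using start_mono[OF nn, of 0 k] k by (simp add: a_def mcn_start_def)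
  have ab: "a \<le> b" using nn k by (simp add: b_def)
  define g where "g p = {(real p - 1) * T<..real p * T} \<inter> {a<..b}" for p :: nat
  have eq: "emeasure lborel {t \<in> {real j * T<..(real j + 1) * T}. mcn_sched T cs p t = Some k}
      = emeasure lborel (g p)" for p
  proof (cases "p = 0")
    case True
    have "g p = {}" using True a0 T by (auto simp: g_def)
    moreover have "{t \<in> {real j * T<..(real j + 1) * T}. mcn_sched T cs p t = Some k} = {}"
      using True by (auto simp: mcn_sched_def)
    ultimately show ?thesis by (metis emeasure_empty)
  next
    case False
    define d where "d = real j * T - (real p - 1) * T"
    have "{t \<in> {real j * T<..(real j + 1) * T}. mcn_sched T cs p t = Some k}
       = {max (real j * T) (a + d)<..min ((real j + 1) * T) (b + d)}"
    proof (rule set_eqI)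
      fix t
      show "t \<in> {t \<in> {real j * T<..(real j + 1) * T}. mcn_sched T cs p t = Some k} \<longleftrightarrow>
         t \<in> {max (real j * T) (a + d)<..min ((real j + 1) * T) (b + d)}"
      proof (cases "real j * T < t \<and> t \<le> (real j + 1) * T")
        case True
        then show ?thesis using sched_some[OF T nn _ _ _ k, of j t p] False
          by (auto simp: a_def b_def d_def algebra_simps)
      next
        case False
        then show ?thesis by auto
      qed
    qed
    then have "emeasure lborel {t \<in> {real j * T<..(real j + 1) * T}. mcn_sched T cs p t = Some k}
      = ennreal (min ((real j + 1) * T) (b + d) - max (real j * T) (a + d))"
      by (simp add: Ioc_meas)
    also have "\<dots> = ennreal (min (real p * T) b - max ((real p - 1) * T) a)"
    proof -
      have "(real j + 1) * T = real p * T + d" "real j * T = (real p - 1) * T + d"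
        by (auto simp: d_def algebra_simps)
      then show ?thesis by (simp add: min_def max_def)
    qed
    also have "\<dots> = emeasure lborel (g p)"
      by (simp add: g_def Ioc_inter Ioc_meas)
    finally show ?thesis .
  qed
  have "(\<Sum>p. emeasure lborel (g p)) = emeasure lborel (\<Union>p. g p)"
  proof (rule suminf_emeasure)
    show "range g \<subseteq> sets lborel" by (auto simp: g_def)
    show "disjoint_family g"
      unfolding disjoint_family_on_def
    proof (intro ballI impI)
      fix p q :: nat assume "p \<noteq> q"
      then consider "p < q" | "q < p" by linarith
      then show "g p \<inter> g q = {}"
      proof cases
        case 1
        then have "real p \<le> real q - 1" by simp
        then have "real p * T \<le> (real q - 1) * T" using T by (simp add: mult_right_mono)
        then show ?thesis by (auto simp: g_def)
      next
        case 2
        then have "real q \<le> real p - 1" by simp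
        then have "real q * T \<le> (real p - 1) * T" using T by (simp add: mult_right_mono)
        then show ?thesis by (auto simp: g_def)
      qed
    qed
  qed
  also have "(\<Union>p. g p) = {a<..b}"
  proof
    show "(\<Union>p. g p) \<subseteq> {a<..b}" by (auto simp: g_def)
    show "{a<..b} \<subseteq> (\<Union>p. g p)"
    proof
      fix y assume y: "y \<in> {a<..b}"
      then have y0: "y > 0" using a0 by auto
      define p where "p = nat \<lceil>y / T\<rceil>"
      have c: "real_of_int \<lceil>y / T\<rceil> - 1 < y / T" "y / T \<le> real_of_int \<lceil>y / T\<rceil>"
        by linarith+
      have "y / T > 0" using y0 T by simp
      then have "\<lceil>y / T\<rceil> \<ge> 0" by simp
      then have rp: "real p = real_of_int \<lceil>y / T\<rceil>" by (simp add: p_def)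
      have "(real p - 1) < y / T" "y / T \<le> real p" using c rp by auto
      then have "(real p - 1) * T < y" "y \<le> real p * T" using T by (auto simp: field_simps)
      then show "y \<in> (\<Union>p. g p)" using y by (auto simp: g_def)
    qed
  qed
  finally show ?thesis using eq ab by (simp add: Ioc_meas b_def)
qed

lemma window_ex:
  assumes "T > 0" "t > 0"
  shows "\<exists>j::nat. real j * T < t \<and> t \<le> (real j + 1) * T"
proof -
  define j where "j = nat (\<lceil>t / T\<rceil> - 1)"
  have c: "real_of_int \<lceil>t / T\<rceil> - 1 < t / T" "t / T \<le> real_of_int \<lceil>t / T\<rceil>"
    by linarith+
  have "t / T > 0" using assms by simp
  then have "\<lceil>t / T\<rceil> \<ge> 1" by linarith
  then have rj: "real j = real_of_int \<lceil>t / T\<rceil> - 1" by (simp add: j_def)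
  have "real j < t / T" "t / T \<le> real j + 1" using c rj by auto
  then have "real j * T < t" "t \<le> (real j + 1) * T" using assms by (auto simp: field_simps)
  then show ?thesis by blast
qed

lemma sched_SomeD:
  assumes T: "T > 0" and nn: "\<forall>c\<in>set cs. 0 \<le> c" and s: "mcn_sched T cs p t = Some k"
  shows "\<exists>j::nat. real j * T < t \<and> t \<le> (real j + 1) * T \<and> p \<ge> 1 \<and> k < length cs \<and>
    mcn_start cs k < (real p - 1) * T + (t - real j * T) \<and> (real p - 1) * T + (t - real j * T) \<le> mcn_start cs k + cs ! k"
proof -
  have tp: "t > 0" "p \<ge> 1" using s by (auto simp: mcn_sched_def split: if_splits)
  obtain j where j: "real j * T < t" "t \<le> (real j + 1) * T" using window_ex[OF T tp(1)] by blast
  have "k < length cs" using s unfolding mcn_sched_def Let_def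
    apply (auto split: if_splits)
    apply (rule LeastI2)
     apply blast
    apply blast
    done
  then show ?thesis using sched_some[OF T nn j tp(2)] s j tp by blast
qed

lemma success_iff:
  assumes T: "T > 0" and nn: "\<forall>c\<in>set cs. 0 \<le> c" and le: "\<forall>c\<in>set cs. c \<le> T"
  shows "mcn_success T cs m \<longleftrightarrow> sum_list cs \<le> real m * T"
proof
  assume S: "sum_list cs \<le> real m * T"
  have c1: "1 \<le> p \<and> p \<le> m" if nn0: "mcn_sched T cs p t \<noteq> None" for p t
  proof -
    obtain k where "mcn_sched T cs p t = Some k" using nn0 by (cases "mcn_sched T cs p t") auto
    from sched_SomeD[OF T nn this] obtain j where j: "real j * T < t" "p \<ge> 1" "k < length cs"
      "mcn_start cs k < (real p - 1) * T + (t - real j * T)"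
      "(real p - 1) * T + (t - real j * T) \<le> mcn_start cs k + cs ! k" by blast
    have "mcn_start cs (Suc k) \<le> mcn_start cs (length cs)" using j nn by (intro start_mono) auto
    then have "(real p - 1) * T < real m * T" using j S start_Suc[of cs k] start_len[of cs] by linarith
    then have "real p - 1 < real m" using T by simp
    then show ?thesis using j by linarith
  qed
  have c2: "p = q" if "mcn_sched T cs p t = Some k" "mcn_sched T cs q t = Some k" for p q t k
  proof -
    from sched_SomeD[OF T nn that(1)] obtain j where j: "real j * T < t" "t \<le> (real j + 1) * T" "k < length cs"
      "mcn_start cs k < (real p - 1) * T + (t - real j * T)"
      "(real p - 1) * T + (t - real j * T) \<le> mcn_start cs k + cs ! k" by blast
    have kT: "cs ! k \<le> T" using le j(3) by auto
    have q1: "q \<ge> 1" using sched_SomeD[OF T nn that(2)] by blast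
    have q: "mcn_start cs k < (real q - 1) * T + (t - real j * T)"
      "(real q - 1) * T + (t - real j * T) \<le> mcn_start cs k + cs ! k"
      using sched_some[OF T nn j(1,2) q1 j(3)] that(2) by auto
    show "p = q"
    proof (rule ccontr)
      assume "p \<noteq> q"
      then consider "real p + 1 \<le> real q" | "real q + 1 \<le> real p" by linarith
      then show False
      proof cases
        case 1
        then have "real p * T \<le> (real q - 1) * T" using T by (intro mult_right_mono) auto
        then have "(real p - 1) * T + T \<le> (real q - 1) * T" by (simp add: algebra_simps)
        then show False using j q kT by linarith
      next
        case 2
        then have "real q * T \<le> (real p - 1) * T" using T by (intro mult_right_mono) auto
        then have "(real q - 1) * T + T \<le> (real p - 1) * T" by (simp add: algebra_simps)
        then show False using j q kT by linarith
      qed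
    qed
  qed
  show "mcn_success T cs m"
    unfolding mcn_success_def
  proof (intro conjI)
    show "\<forall>p t. mcn_sched T cs p t \<noteq> None \<longrightarrow> 1 \<le> p \<and> p \<le> m" using c1 by blast
    show "\<forall>p q t k. mcn_sched T cs p t = Some k \<and> mcn_sched T cs q t = Some k \<longrightarrow> p = q"
      using c2 by blast
    show "\<forall>j k. k < length cs \<longrightarrow> (\<Sum>p. emeasure lborel {t \<in> {real j * T<..(real j + 1) * T}. mcn_sched T cs p t = Some k}) =
      ennreal (cs ! k)" using meas_k[OF T nn] by blast
  qed
next
  assume succ: "mcn_success T cs m"
  show "sum_list cs \<le> real m * T"
  proof (rule ccontr)
    assume "\<not> ?thesis"
    then have gt: "sum_list cs > real m * T" by simp
    define t where "t = min T (sum_list cs - real m * T)"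
    have t: "0 < t" "t \<le> T" "real m * T + t \<le> sum_list cs" using gt T by (auto simp: t_def)
    have "0 < real m * T + t" using t T by (smt (verit) mult_nonneg_nonneg of_nat_0_le_iff)
    from start_exists[OF this t(3)] obtain k where k: "k < length cs"
      "mcn_start cs k < real m * T + t" "real m * T + t \<le> mcn_start cs k + cs ! k" by blast
    have "mcn_sched T cs (Suc m) t = Some k"
      using sched_some[OF T nn, of 0 t "Suc m" k] t k by simp
    then have "Suc m \<le> m" using succ unfolding mcn_success_def by blast
    then show False by simp
  qed
qed

lemma sumlist_concat: "sum_list (concat xss) = sum_list (map sum_list (xss :: real list list))"
  by (induction xss) auto

theorem theorem5:
  fixes Per :: real and m p :: nat and Theta :: "nat \<Rightarrow> real" and m' :: "nat \<Rightarrow> nat"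
    and cs :: "real list"
  assumes "Per > 0" and "m \<ge> 1"
    and "\<And>i. i \<in> {1..p} \<Longrightarrow> m' i \<ge> 1"
    and "\<And>i. i \<in> {1..p} \<Longrightarrow> (real (m' i) - 1) * Per \<le> Theta i \<and> Theta i \<le> real (m' i) * Per"
    and "mset cs = mset (concat (map (\<lambda>i. mpr_tasks Per (Theta i) (m' i)) [1..<p+1]))"
  shows "mcn_success Per cs m \<longleftrightarrow> (\<Sum>i=1..p. Theta i / Per) \<le> real m"
proof -
  define f where "f i = mpr_tasks Per (Theta i) (m' i)" for i
  have ms: "mset cs = mset (concat (map f [1..<p+1]))" using assms(5) unfolding f_def by simp
  have setcs: "set cs = set (concat (map f [1..<p+1]))" by (metis ms set_mset_mset)
  have bnd: "0 \<le> c \<and> c \<le> Per" if "c \<in> set cs" for c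
  proof -
    have "c \<in> (\<Union>i\<in>set [1..<p+1]. set (f i))" using that setcs by (simp del: upt_Suc)
    then obtain i where i: "i \<in> {1..p}" "c \<in> set (f i)" by (fastforce simp del: upt_Suc simp: less_Suc_eq_le)
    then have "c = Per \<or> c = Theta i - (real (m' i) - 1) * Per"
      by (auto simp: f_def mpr_tasks_def split: if_splits)
    then show ?thesis using assms(1) assms(4)[OF i(1)] by (auto simp: algebra_simps)
  qed
  have fs: "sum_list (f i) = Theta i" if "i \<in> {1..p}" for i
  proof -
    have "real (m' i - 1) = real (m' i) - 1" using assms(3)[OF that] by simp
    then show ?thesis by (simp add: f_def mpr_tasks_def sum_list_replicate algebra_simps)
  qed
  have "sum_list cs = sum_list (concat (map f [1..<p+1]))"
    by (metis ms sum_mset_sum_list)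
  also have "\<dots> = (\<Sum>i\<in>{1..<p+1}. sum_list (f i))"
    by (simp add: sumlist_concat flip: sum_set_upt_conv_sum_list_nat)
  also have "\<dots> = (\<Sum>i=1..p. Theta i)"
    using fs by (intro sum.cong) auto
  finally have S: "sum_list cs = (\<Sum>i=1..p. Theta i)" .
  have "mcn_success Per cs m \<longleftrightarrow> sum_list cs \<le> real m * Per"
    using success_iff[OF assms(1)] bnd by blast
  also have "\<dots> \<longleftrightarrow> (\<Sum>i=1..p. Theta i) / Per \<le> real m"
    using assms(1) by (simp add: S pos_divide_le_eq)
  also have "(\<Sum>i=1..p. Theta i) / Per = (\<Sum>i=1..p. Theta i / Per)"
    by (simp add: sum_divide_distrib)
  finally show ?thesis .
qed

end
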